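(* Let $\langle\vec l,\vec c\rangle$ be a ladder system coloring and $E\subseteq\omega_1$ a stationary and co-stationary set. Then $\mathbb{P}_E(\vec l,\vec c)$ is $\mathsf{stat}_{\omega_1\setminus E}$-pc.
   Context: A ladder system is $\vec l=\langle l_\alpha:\alpha\in\omega_1\cap\mathrm{Lim}\rangle$ with each $l_\alpha\subseteq\alpha$ cofinal in $\alpha$ of order type $\omega$; $l_{\alpha,n}$ is the $n$-th element of $l_\alpha$ and $l_\alpha^n=\{l_{\alpha,m}:m\ge n\}$. A ladder system coloring is $\langle\vec l,\vec c\rangle$ with $\vec c=\langle c_\alpha:l_\alpha\to\omega\rangle$. $\mathbb{P}_E(\vec l,\vec c)$ is the set of finite partial functions $p$ from $E\cap\mathrm{Lim}$ to $\omega$ such that $\bigcup_{\alpha\in\mathrm{dom}(p)}c_\alpha\restriction l_\alpha^{p(\alpha)}$ is a function, ordered by $q\le p$ iff $q\supseteq p$. For $X\subseteq\omega_1$, $\mathsf{stat}_X$ is the family of stationary subsets of $\omega_1$ contained in $X$; a poset is $\mathsf{stat}_X$-pc if for every $S\in\mathsf{stat}_X$ and every $\langle p_\alpha:\alpha\in S\rangle$ there is $S'\in\mathsf{stat}_S$ with $\{p_\alpha:\alpha\in S'\}$ centered (every finite subset has a common lower bound). *)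

theory Defs
  imports Main "HOL-Library.Countable_Set"
begin

text \<open>omega_1 is modelled by a well-ordered type 'a which is uncountable and all of
whose proper initial segments are countable (these assumptions appear in the theorem).\<close>

definition is_limit :: "'a::wellorder \<Rightarrow> bool" where
  "is_limit \<alpha> \<longleftrightarrow> (\<exists>y. y < \<alpha>) \<and> (\<forall>y<\<alpha>. \<exists>z. y < z \<and> z < \<alpha>)"

definition unbounded :: "'a::wellorder set \<Rightarrow> bool" where
  "unbounded C \<longleftrightarrow> (\<forall>x. \<exists>y\<in>C. x \<le> y)"

definition closed_set :: "'a::wellorder set \<Rightarrow> bool" where
  "closed_set C \<longleftrightarrow> (\<forall>\<alpha>. is_limit \<alpha> \<and> (\<forall>y<\<alpha>. \<exists>z\<in>C. y \<le> z \<and> z < \<alpha>) \<longrightarrow> \<alpha> \<in> C)"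

definition club :: "'a::wellorder set \<Rightarrow> bool" where
  "club C \<longleftrightarrow> closed_set C \<and> unbounded C"

definition stationary :: "'a::wellorder set \<Rightarrow> bool" where
  "stationary S \<longleftrightarrow> (\<forall>C. club C \<longrightarrow> S \<inter> C \<noteq> {})"

text \<open>A ladder system: for each limit alpha, l alpha is the strictly increasing
enumeration of the ladder l_alpha (so l alpha n = l_{alpha,n}), cofinal in alpha.\<close>

definition ladder_system :: "('a::wellorder \<Rightarrow> nat \<Rightarrow> 'a) \<Rightarrow> bool" where
  "ladder_system l \<longleftrightarrow> (\<forall>\<alpha>. is_limit \<alpha> \<longrightarrow>
      strict_mono (l \<alpha>) \<and> (\<forall>n. l \<alpha> n < \<alpha>) \<and> (\<forall>y<\<alpha>. \<exists>n. y < l \<alpha> n))"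

definition ladder :: "('a \<Rightarrow> nat \<Rightarrow> 'a) \<Rightarrow> 'a \<Rightarrow> 'a set" where
  "ladder l \<alpha> = range (l \<alpha>)"

definition ladder_tail :: "('a \<Rightarrow> nat \<Rightarrow> 'a) \<Rightarrow> 'a \<Rightarrow> nat \<Rightarrow> 'a set" where
  "ladder_tail l \<alpha> n = {l \<alpha> m | m. m \<ge> n}"

text \<open>The coloring c alpha : l_alpha -> omega is represented by c alpha restricted to
ladder l alpha; values outside the ladder are irrelevant.\<close>

definition PE :: "'a::wellorder set \<Rightarrow> ('a \<Rightarrow> nat \<Rightarrow> 'a) \<Rightarrow> ('a \<Rightarrow> 'a \<Rightarrow> nat)
    \<Rightarrow> ('a \<rightharpoonup> nat) set" where
  "PE E l c = {p. finite (dom p) \<and> dom p \<subseteq> E \<inter> {\<alpha>. is_limit \<alpha>} \<and>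
     (\<forall>\<alpha> \<beta> n m \<xi>. p \<alpha> = Some n \<longrightarrow> p \<beta> = Some m \<longrightarrow>
        \<xi> \<in> ladder_tail l \<alpha> n \<longrightarrow> \<xi> \<in> ladder_tail l \<beta> m \<longrightarrow> c \<alpha> \<xi> = c \<beta> \<xi>)}"

text \<open>Order: q \<le> p iff q extends p. Centered: every finite subset has a common lower bound in P.\<close>

definition centered :: "('a \<rightharpoonup> nat) set \<Rightarrow> ('a \<rightharpoonup> nat) set \<Rightarrow> bool" where
  "centered P A \<longleftrightarrow> (\<forall>F. finite F \<and> F \<subseteq> A \<longrightarrow> (\<exists>q\<in>P. \<forall>p\<in>F. p \<subseteq>\<^sub>m q))"

definition stat_pc :: "'a::wellorder set \<Rightarrow> ('a \<rightharpoonup> nat) set \<Rightarrow> bool" where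
  "stat_pc X P \<longleftrightarrow> (\<forall>S pp. stationary S \<and> S \<subseteq> X \<and> (\<forall>\<alpha>\<in>S. pp \<alpha> \<in> P) \<longrightarrow>
      (\<exists>S'. stationary S' \<and> S' \<subseteq> S \<and> centered P (pp ` S')))"

end

theory Submission
  imports Defs
begin

lemma countable_bounded:
  assumes unc: "\<not> countable (UNIV::'a::wellorder set)" and seg: "\<And>x::'a. countable {y. y<x}"
    and A: "countable (A::'a set)"
  shows "\<exists>b. \<forall>a\<in>A. a < b"
proof -
  have "countable (\<Union>a\<in>A. insert a {y. y<a})" using A seg by auto
  then have "(\<Union>a\<in>A. insert a {y. y<a}) \<noteq> UNIV" using unc by metis
  then obtain b where "b \<notin> (\<Union>a\<in>A. insert a {y. y<a})" by blast
  then show ?thesis by (metis (mono_tags, lifting) UN_I insertCI mem_Collect_eq neqE)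
qed

lemma omega_sup:
  fixes x :: "nat \<Rightarrow> 'a::wellorder"
  assumes bnd: "\<And>A::'a set. countable A \<Longrightarrow> \<exists>b. \<forall>a\<in>A. a < b"
    and inc: "\<And>n. x n < x (Suc n)"
  shows "\<exists>\<gamma>. is_limit \<gamma> \<and> (\<forall>n. x n < \<gamma>) \<and> (\<forall>y<\<gamma>. \<exists>n. y < x n)"
proof -
  obtain b where b: "\<forall>a\<in>range x. a < b" using bnd[of "range x"] by auto
  define \<gamma> where "\<gamma> = (LEAST u. \<forall>n. x n \<le> u)"
  have le: "\<forall>n. x n \<le> \<gamma>" unfolding \<gamma>_def by (rule LeastI[of _ b]) (use b in \<open>auto intro: less_imp_le\<close>)
  have lt: "\<forall>n. x n < \<gamma>" using le inc by (meson less_le_trans)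
  have cof: "\<forall>y<\<gamma>. \<exists>n. y < x n"
  proof (intro allI impI)
    fix y assume "y < \<gamma>"
    show "\<exists>n. y < x n"
    proof (rule ccontr)
      assume "\<not> ?thesis" then have "\<forall>n. x n \<le> y" by (auto simp: not_less)
      then have "\<gamma> \<le> y" unfolding \<gamma>_def by (rule Least_le)
      with \<open>y<\<gamma>\<close> show False by simp
    qed
  qed
  have "is_limit \<gamma>" unfolding is_limit_def using lt cof by blast
  then show ?thesis using lt cof by blast
qed

lemma unbounded_choice: "unbounded C \<Longrightarrow> \<exists>f. \<forall>y. f y \<in> C \<and> y \<le> f y"
  unfolding unbounded_def by metis

lemma succ_choice:
  assumes bnd: "\<And>A::'a::wellorder set. countable A \<Longrightarrow> \<exists>b. \<forall>a\<in>A. a < b"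
  shows "\<exists>s::'a\<Rightarrow>'a. \<forall>y. y < s y"
proof -
  have "\<exists>b. y < b" for y::'a using bnd[of "{y}"] by auto
  then show ?thesis by metis
qed

lemma club_Int:
  assumes bnd: "\<And>A::'a::wellorder set. countable A \<Longrightarrow> \<exists>b. \<forall>a\<in>A. a < b"
    and C: "club C" and D: "club (D::'a set)"
  shows "club (C \<inter> D)"
proof -
  have cC: "closed_set C" and cD: "closed_set D" using C D by (auto simp: club_def)
  have "closed_set (C \<inter> D)" using cC cD unfolding closed_set_def by blast
  moreover have "unbounded (C \<inter> D)"
    unfolding unbounded_def
  proof
    fix x0
    obtain fC where fC: "\<forall>y. fC y \<in> C \<and> y \<le> fC y" using C unbounded_choice club_def by metis
    obtain fD where fD: "\<forall>y. fD y \<in> D \<and> y \<le> fD y" using D unbounded_choice club_def by metis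
    have fC1: "\<And>y. fC y \<in> C" and fC2: "\<And>y. y \<le> fC y" using fC by auto
    have fD1: "\<And>y. fD y \<in> D" and fD2: "\<And>y. y \<le> fD y" using fD by auto
    obtain s where s: "\<And>y::'a. y < s y" using succ_choice[OF bnd] by blast
    define x where "x = rec_nat x0 (\<lambda>_ y. s (fD (fC y)))"
    have xS: "x (Suc n) = s (fD (fC (x n)))" for n by (simp add: x_def)
    have a1: "x n \<le> fD (fC (x n))" for n using order.trans[OF fC2 fD2] .
    have a2: "fD (fC (x n)) < x (Suc n)" for n unfolding xS by (rule s)
    have a3: "fC (x n) < x (Suc n)" for n using le_less_trans[OF fD2 a2] .
    have inc: "x n < x (Suc n)" for n using le_less_trans[OF a1 a2] .
    obtain \<gamma> where g: "is_limit \<gamma>" "\<And>n. x n < \<gamma>" "\<And>y. y<\<gamma> \<Longrightarrow> \<exists>n. y < x n"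
      using omega_sup[where x=x, OF bnd inc] by blast
    have "\<gamma> \<in> C"
    proof -
      have "\<forall>y<\<gamma>. \<exists>z\<in>C. y \<le> z \<and> z < \<gamma>"
      proof (intro allI impI)
        fix y assume "y < \<gamma>"
        then obtain n where n: "y < x n" using g by blast
        have "y \<le> fC (x n)" using less_imp_le[OF less_le_trans[OF n fC2]] .
        moreover have "fC (x n) < \<gamma>" using less_trans[OF a3 g(2)] .
        ultimately show "\<exists>z\<in>C. y \<le> z \<and> z < \<gamma>" using fC1 by blast
      qed
      then show ?thesis using cC g(1) unfolding closed_set_def by blast
    qed
    moreover have "\<gamma> \<in> D"
    proof -
      have "\<forall>y<\<gamma>. \<exists>z\<in>D. y \<le> z \<and> z < \<gamma>"
      proof (intro allI impI)
        fix y assume "y < \<gamma>"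
        then obtain n where n: "y < x n" using g by blast
        have "y \<le> fD (fC (x n))" using less_imp_le[OF less_le_trans[OF n a1]] .
        moreover have "fD (fC (x n)) < \<gamma>" using less_trans[OF a2 g(2)] .
        ultimately show "\<exists>z\<in>D. y \<le> z \<and> z < \<gamma>" using fD1 by blast
      qed
      then show ?thesis using cD g(1) unfolding closed_set_def by blast
    qed
    moreover have "x0 \<le> \<gamma>" using g(2)[of 0] by (simp add: x_def)
    ultimately show "\<exists>y\<in>C \<inter> D. x0 \<le> y" by blast
  qed
  ultimately show ?thesis by (simp add: club_def)
qed
lemma club_closure:
  assumes bnd: "\<And>A::'a::wellorder set. countable A \<Longrightarrow> \<exists>b. \<forall>a\<in>A. a < b"
    and seg: "\<And>x::'a. countable {y. y < x}"
  shows "club {\<gamma>::'a. \<forall>\<alpha><\<gamma>. h \<alpha> < \<gamma>}"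
proof -
  let ?C = "{\<gamma>::'a. \<forall>\<alpha><\<gamma>. h \<alpha> < \<gamma>}"
  have "closed_set ?C"
    unfolding closed_set_def
  proof (intro allI impI)
    fix \<alpha> :: 'a assume H: "is_limit \<alpha> \<and> (\<forall>y<\<alpha>. \<exists>z\<in>?C. y \<le> z \<and> z < \<alpha>)"
    show "\<alpha> \<in> ?C"
    proof (intro CollectI allI impI)
      fix \<beta> assume "\<beta> < \<alpha>"
      then obtain w where w: "\<beta> < w" "w < \<alpha>" using H unfolding is_limit_def by blast
      then obtain z where z: "z \<in> ?C" "w \<le> z" "z < \<alpha>" using H by blast
      have "\<beta> < z" using w z by simp
      then have "h \<beta> < z" using z by blast
      then show "h \<beta> < \<alpha>" using z by simp
    qed
  qed
  moreover have "unbounded ?C"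
    unfolding unbounded_def
  proof
    fix x0 :: 'a
    have "\<forall>y. \<exists>b. \<forall>a\<in>insert y (h ` {a. a \<le> y}). a < b"
    proof
      fix y :: 'a
      have "{a. a \<le> y} = insert y {a. a < y}" by (auto simp: le_less)
      then have "countable {a. a \<le> y}" using seg by simp
      then show "\<exists>b. \<forall>a\<in>insert y (h ` {a. a \<le> y}). a < b" by (intro bnd) simp
    qed
    then obtain g where g0: "\<forall>y. \<forall>a\<in>insert y (h ` {a. a \<le> y}). a < g y" by (rule choice[THEN exE])
    have g: "\<And>y. y < g y" "\<And>y a. a \<le> y \<Longrightarrow> h a < g y" using g0 by auto
    define x where "x = rec_nat x0 (\<lambda>_ y. g y)"
    have xS: "x (Suc n) = g (x n)" for n by (simp add: x_def)
    have inc: "x n < x (Suc n)" for n unfolding xS by (rule g)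
    obtain \<gamma> where gg: "is_limit \<gamma>" "\<And>n. x n < \<gamma>" "\<And>y. y<\<gamma> \<Longrightarrow> \<exists>n. y < x n"
      using omega_sup[where x=x, OF bnd inc] by blast
    have "\<gamma> \<in> ?C"
    proof (intro CollectI allI impI)
      fix \<beta> assume "\<beta> < \<gamma>"
      then obtain n where n: "\<beta> < x n" using gg by blast
      have "h \<beta> < x (Suc n)" unfolding xS using g(2) n by simp
      then show "h \<beta> < \<gamma>" using gg(2)[of "Suc n"] by simp
    qed
    moreover have "x0 \<le> \<gamma>" using gg(2)[of 0] by (simp add: x_def)
    ultimately show "\<exists>y\<in>?C. x0 \<le> y" by blast
  qed
  ultimately show ?thesis by (simp add: club_def)
qed

lemma club_limits:
  assumes bnd: "\<And>A::'a::wellorder set. countable A \<Longrightarrow> \<exists>b. \<forall>a\<in>A. a < b"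
  shows "club {\<alpha>::'a. is_limit \<alpha>}"
proof -
  have "closed_set {\<alpha>::'a. is_limit \<alpha>}" unfolding closed_set_def by blast
  moreover have "unbounded {\<alpha>::'a. is_limit \<alpha>}"
    unfolding unbounded_def
  proof
    fix x0 :: 'a
    obtain s where s: "\<And>y::'a. y < s y" using succ_choice[OF bnd] by blast
    define x where "x = rec_nat x0 (\<lambda>_ y. s y)"
    have inc: "x n < x (Suc n)" for n by (simp add: x_def s)
    obtain \<gamma> where gg: "is_limit \<gamma>" "\<And>n. x n < \<gamma>"
      using omega_sup[where x=x, OF bnd inc] by blast
    moreover have "x0 \<le> \<gamma>" using gg(2)[of 0] by (simp add: x_def)
    ultimately show "\<exists>y\<in>{\<alpha>. is_limit \<alpha>}. x0 \<le> y" by blast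
  qed
  ultimately show ?thesis by (simp add: club_def)
qed

lemma club_gt:
  assumes bnd: "\<And>A::'a::wellorder set. countable A \<Longrightarrow> \<exists>b. \<forall>a\<in>A. a < b"
  shows "club {\<alpha>::'a. b < \<alpha>}"
proof -
  have "closed_set {\<alpha>::'a. b < \<alpha>}" unfolding closed_set_def
  proof (intro allI impI)
    fix \<alpha> :: 'a assume H: "is_limit \<alpha> \<and> (\<forall>y<\<alpha>. \<exists>z\<in>{\<alpha>. b < \<alpha>}. y \<le> z \<and> z < \<alpha>)"
    then obtain y where "y < \<alpha>" unfolding is_limit_def by blast
    then obtain z where "b < z" "z < \<alpha>" using H by blast
    then show "\<alpha> \<in> {\<alpha>. b < \<alpha>}" by simp
  qed
  moreover have "unbounded {\<alpha>::'a. b < \<alpha>}"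
    unfolding unbounded_def
  proof
    fix x0 :: 'a
    obtain s where s: "\<And>y::'a. y < s y" using succ_choice[OF bnd] by blast
    show "\<exists>y\<in>{\<alpha>. b < \<alpha>}. x0 \<le> y"
      by (rule bexI[of _ "max x0 (s b)"]) (auto simp: s less_max_iff_disj)
  qed
  ultimately show ?thesis by (simp add: club_def)
qed

lemma stationary_Int_club:
  assumes bnd: "\<And>A::'a::wellorder set. countable A \<Longrightarrow> \<exists>b. \<forall>a\<in>A. a < b"
    and "stationary S" "club (C::'a set)"
  shows "stationary (S \<inter> C)"
  using assms club_Int[OF bnd] unfolding stationary_def by (metis inf_assoc)

lemma stationary_mono: "stationary S \<Longrightarrow> S \<subseteq> T \<Longrightarrow> stationary T"
  unfolding stationary_def by blast

lemma stationary_ne: "stationary S \<Longrightarrow> S \<noteq> {}"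
proof -
  have "club (UNIV::'a::wellorder set)" by (auto simp: club_def closed_set_def unbounded_def)
  then show "stationary S \<Longrightarrow> S \<noteq> {}" unfolding stationary_def by auto
qed


lemma fodor:
  assumes bnd: "\<And>A::'a::wellorder set. countable A \<Longrightarrow> \<exists>b. \<forall>a\<in>A. a < b"
    and seg: "\<And>x::'a. countable {y. y < x}"
    and S: "stationary (S::'a set)" and reg: "\<And>\<alpha>. \<alpha> \<in> S \<Longrightarrow> f \<alpha> < \<alpha>"
  shows "\<exists>\<delta>. stationary {\<alpha>\<in>S. f \<alpha> = \<delta>}"
proof (rule ccontr)
  assume "\<not> ?thesis"
  then have "\<forall>\<delta>. \<exists>C. club C \<and> {\<alpha>\<in>S. f \<alpha> = \<delta>} \<inter> C = {}" by (auto simp: stationary_def)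
  then obtain Cf where Cf: "\<And>\<delta>. club (Cf \<delta>)" "\<And>\<delta>. {\<alpha>\<in>S. f \<alpha> = \<delta>} \<inter> Cf \<delta> = {}" by metis
  define D where "D = {\<alpha>. \<forall>\<delta><\<alpha>. \<alpha> \<in> Cf \<delta>}"
  have cl: "closed_set D"
    unfolding closed_set_def
  proof (intro allI impI)
    fix \<alpha> :: 'a assume H: "is_limit \<alpha> \<and> (\<forall>y<\<alpha>. \<exists>z\<in>D. y \<le> z \<and> z < \<alpha>)"
    show "\<alpha> \<in> D" unfolding D_def
    proof (intro CollectI allI impI)
      fix \<delta> assume d: "\<delta> < \<alpha>"
      have "\<forall>y<\<alpha>. \<exists>z\<in>Cf \<delta>. y \<le> z \<and> z < \<alpha>"
      proof (intro allI impI)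
        fix y assume y: "y < \<alpha>"
        then have "max y \<delta> < \<alpha>" using d by simp
        then obtain w where w: "max y \<delta> < w" "w < \<alpha>" using H unfolding is_limit_def by blast
        then obtain z where z: "z \<in> D" "w \<le> z" "z < \<alpha>" using H by blast
        have "\<delta> < z" "y \<le> z" using w z by auto
        then show "\<exists>z\<in>Cf \<delta>. y \<le> z \<and> z < \<alpha>" using z unfolding D_def by blast
      qed
      then show "\<alpha> \<in> Cf \<delta>" using Cf(1)[of \<delta>] H unfolding club_def closed_set_def by blast
    qed
  qed
  have ub: "unbounded D"
    unfolding unbounded_def
  proof
    fix x0 :: 'a
    have "\<forall>\<delta>. \<forall>y. \<exists>z. z \<in> Cf \<delta> \<and> y \<le> z" using Cf(1) unfolding club_def unbounded_def by blast
    then obtain fC where fC: "\<And>\<delta> y. fC \<delta> y \<in> Cf \<delta>" "\<And>\<delta> y. y \<le> fC \<delta> y" by metis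
    have "\<forall>y. \<exists>b. \<forall>a\<in>insert y ((\<lambda>\<delta>. fC \<delta> y) ` {a. a \<le> y}). a < b"
    proof
      fix y :: 'a
      have "{a. a \<le> y} = insert y {a. a < y}" by (auto simp: le_less)
      then have "countable {a. a \<le> y}" using seg by simp
      then show "\<exists>b. \<forall>a\<in>insert y ((\<lambda>\<delta>. fC \<delta> y) ` {a. a \<le> y}). a < b" by (intro bnd) simp
    qed
    then obtain g where g0: "\<forall>y. \<forall>a\<in>insert y ((\<lambda>\<delta>. fC \<delta> y) ` {a. a \<le> y}). a < g y"
      by (rule choice[THEN exE])
    have g: "\<And>y. y < g y" "\<And>y \<delta>. \<delta> \<le> y \<Longrightarrow> fC \<delta> y < g y" using g0 by auto
    define x where "x = rec_nat x0 (\<lambda>_ y. g y)"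
    have xS: "x (Suc n) = g (x n)" for n by (simp add: x_def)
    have inc: "x n < x (Suc n)" for n unfolding xS by (rule g)
    have mono: "m \<le> k \<Longrightarrow> x m \<le> x k" for m k
      using lift_Suc_mono_le[of x, OF less_imp_le[OF inc]] by blast
    obtain \<gamma> where gg: "is_limit \<gamma>" "\<And>n. x n < \<gamma>" "\<And>y. y<\<gamma> \<Longrightarrow> \<exists>n. y < x n"
      using omega_sup[where x=x, OF bnd inc] by blast
    have "\<gamma> \<in> D" unfolding D_def
    proof (intro CollectI allI impI)
      fix \<delta> assume "\<delta> < \<gamma>"
      then obtain m where m: "\<delta> < x m" using gg by blast
      have "\<forall>y<\<gamma>. \<exists>z\<in>Cf \<delta>. y \<le> z \<and> z < \<gamma>"
      proof (intro allI impI)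
        fix y assume "y < \<gamma>"
        then obtain n where n: "y < x n" using gg by blast
        define k where "k = max n m"
        have "x n \<le> x k" "x m \<le> x k" using mono k_def by auto
        then have "\<delta> \<le> x k" "y \<le> fC \<delta> (x k)" using m n fC(2)[of "x k" \<delta>] by auto
        moreover have "fC \<delta> (x k) < \<gamma>" using g(2)[OF \<open>\<delta> \<le> x k\<close>] gg(2)[of "Suc k"] xS[of k] by simp
        ultimately show "\<exists>z\<in>Cf \<delta>. y \<le> z \<and> z < \<gamma>" using fC(1) by blast
      qed
      then show "\<gamma> \<in> Cf \<delta>" using Cf(1)[of \<delta>] gg(1) unfolding club_def closed_set_def by blast
    qed
    moreover have "x0 \<le> \<gamma>" using gg(2)[of 0] by (simp add: x_def)
    ultimately show "\<exists>y\<in>D. x0 \<le> y" by blast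
  qed
  have "S \<inter> D \<noteq> {}" using S cl ub unfolding stationary_def club_def by blast
  then obtain \<alpha> where a: "\<alpha> \<in> S" "\<alpha> \<in> D" by blast
  then have "\<alpha> \<in> Cf (f \<alpha>)" using reg unfolding D_def by blast
  then show False using Cf(2)[of "f \<alpha>"] a by blast
qed

lemma countable_coloring:
  assumes unc: "\<not> countable (UNIV::'a::wellorder set)"
    and bnd: "\<And>A::'a::wellorder set. countable A \<Longrightarrow> \<exists>b. \<forall>a\<in>A. a < b"
    and seg: "\<And>x::'a. countable {y. y < x}"
    and S: "stationary (S::'a set)" and X: "countable X" and K: "\<And>\<alpha>. \<alpha> \<in> S \<Longrightarrow> K \<alpha> \<in> X"
  shows "\<exists>k. stationary {\<alpha>\<in>S. K \<alpha> = k}"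
proof -
  have "infinite (UNIV::'a set)" using unc by (metis countable_finite)
  then obtain i :: "nat \<Rightarrow> 'a" where i: "inj i" by (meson infinite_countable_subset)
  define e where "e = i \<circ> to_nat_on X"
  have e: "inj_on e X" unfolding e_def using i X by (metis comp_inj_on inj_on_to_nat_on inj_on_subset subset_UNIV)
  obtain b where b: "\<forall>a\<in>e ` X. a < b" using bnd[of "e ` X"] X by blast
  define S' where "S' = S \<inter> {\<alpha>. b < \<alpha>}"
  have S': "stationary S'" unfolding S'_def by (rule stationary_Int_club[OF bnd S club_gt[OF bnd]])
  have reg: "e (K \<alpha>) < \<alpha>" if "\<alpha> \<in> S'" for \<alpha>
  proof -
    have "K \<alpha> \<in> X" "b < \<alpha>" using K that unfolding S'_def by auto
    then show ?thesis using b by (meson image_eqI less_trans)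
  qed
  have "\<exists>\<delta>. stationary {\<alpha>\<in>S'. e (K \<alpha>) = \<delta>}"
    by (rule fodor[where f="\<lambda>\<alpha>. e (K \<alpha>)", OF bnd seg S' reg])
  then obtain \<delta> where d: "stationary {\<alpha>\<in>S'. e (K \<alpha>) = \<delta>}" by blast
  then obtain \<alpha>0 where a0: "\<alpha>0 \<in> S'" "e (K \<alpha>0) = \<delta>" using stationary_ne by fastforce
  have "{\<alpha>\<in>S'. e (K \<alpha>) = \<delta>} \<subseteq> {\<alpha>\<in>S. K \<alpha> = K \<alpha>0}"
  proof
    fix \<alpha> assume "\<alpha> \<in> {\<alpha>\<in>S'. e (K \<alpha>) = \<delta>}"
    then have "\<alpha> \<in> S" "e (K \<alpha>) = e (K \<alpha>0)" using a0 unfolding S'_def by auto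
    moreover have "K \<alpha> \<in> X" "K \<alpha>0 \<in> X" using K a0(1) \<open>\<alpha>\<in>S\<close> unfolding S'_def by auto
    ultimately show "\<alpha> \<in> {\<alpha>\<in>S. K \<alpha> = K \<alpha>0}" using e by (auto dest: inj_onD)
  qed
  then show ?thesis using d stationary_mono by blast
qed

lemma countable_finite_maps:
  assumes "countable A"
  shows "countable {m :: 'a \<rightharpoonup> nat. finite (dom m) \<and> dom m \<subseteq> A}"
proof -
  have fin: "finite (Map.graph m)" if "finite (dom m)" for m :: "'a \<rightharpoonup> nat"
  proof -
    have "Map.graph m \<subseteq> (\<lambda>a. (a, the (m a))) ` dom m" by (auto simp: Map.graph_def)
    then show ?thesis using that finite_surj by blast
  qed
  have "Map.graph ` {m :: 'a \<rightharpoonup> nat. finite (dom m) \<and> dom m \<subseteq> A} \<subseteq> {G. finite G \<and> G \<subseteq> A \<times> UNIV}"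
    using fin by (auto simp: Map.graph_def)
  moreover have "countable {G. finite G \<and> G \<subseteq> A \<times> (UNIV::nat set)}"
    using assms by (intro countable_Collect_finite_subset) auto
  moreover have "inj (Map.graph :: ('a \<rightharpoonup> nat) \<Rightarrow> _)"
  proof (rule injI)
    fix m1 m2 :: "'a \<rightharpoonup> nat" assume "Map.graph m1 = Map.graph m2"
    then show "m1 = m2" by (metis in_graphD in_graphI option.exhaust ext)
  qed
  ultimately show ?thesis by (meson countable_image_inj_on countable_subset inj_on_subset subset_UNIV)
qed


lemma ladfin:
  assumes ls: "ladder_system l" and b: "is_limit \<beta>" and ab: "\<alpha> < \<beta>"
  shows "finite {\<xi>. \<xi> < \<alpha> \<and> \<xi> \<in> range (l \<beta>)}"
proof -
  have sm: "strict_mono (l \<beta>)" and cof: "\<forall>y<\<beta>. \<exists>n. y < l \<beta> n"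
    using ls b unfolding ladder_system_def by auto
  obtain N where N: "\<alpha> < l \<beta> N" using cof ab by blast
  have "{\<xi>. \<xi> < \<alpha> \<and> \<xi> \<in> range (l \<beta>)} \<subseteq> l \<beta> ` {..<N}"
  proof
    fix \<xi> assume "\<xi> \<in> {\<xi>. \<xi> < \<alpha> \<and> \<xi> \<in> range (l \<beta>)}"
    then obtain m where m: "\<xi> = l \<beta> m" "l \<beta> m < \<alpha>" by auto
    then have "l \<beta> m < l \<beta> N" using N by simp
    then have "m < N" using sm by (simp add: strict_mono_less)
    then show "\<xi> \<in> l \<beta> ` {..<N}" using m by auto
  qed
  then show ?thesis by (rule finite_subset) simp
qed

lemma ladlt:
  assumes ls: "ladder_system l" and b: "is_limit \<beta>" and x: "\<xi> \<in> ladder_tail l \<beta> n"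
  shows "\<xi> < \<beta>"
proof -
  have "\<forall>n. l \<beta> n < \<beta>" using ls b unfolding ladder_system_def by blast
  moreover obtain k where "\<xi> = l \<beta> k" using x unfolding ladder_tail_def by blast
  ultimately show ?thesis by simp
qed

lemma PE_unpack:
  assumes "p \<in> PE E l c"
  shows "finite (dom p)" "\<beta> \<in> dom p \<Longrightarrow> \<beta> \<in> E \<and> is_limit \<beta>"
    "p \<beta> = Some n \<Longrightarrow> p \<gamma> = Some m \<Longrightarrow> \<xi> \<in> ladder_tail l \<beta> n \<Longrightarrow> \<xi> \<in> ladder_tail l \<gamma> m \<Longrightarrow> c \<beta> \<xi> = c \<gamma> \<xi>"
proof -
  have all: "finite (dom p) \<and> dom p \<subseteq> E \<inter> {\<alpha>. is_limit \<alpha>} \<and> (\<forall>\<alpha> \<beta> n m \<xi>. p \<alpha> = Some n \<longrightarrow> p \<beta> = Some m \<longrightarrow>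
        \<xi> \<in> ladder_tail l \<alpha> n \<longrightarrow> \<xi> \<in> ladder_tail l \<beta> m \<longrightarrow> c \<alpha> \<xi> = c \<beta> \<xi>)"
    using assms unfolding PE_def by (rule CollectD)
  have d: "finite (dom p)" "dom p \<subseteq> E \<inter> {\<alpha>. is_limit \<alpha>}"
    and cc: "\<forall>\<alpha> \<beta> n m \<xi>. p \<alpha> = Some n \<longrightarrow> p \<beta> = Some m \<longrightarrow>
        \<xi> \<in> ladder_tail l \<alpha> n \<longrightarrow> \<xi> \<in> ladder_tail l \<beta> m \<longrightarrow> c \<alpha> \<xi> = c \<beta> \<xi>"
    using all by blast+
  show "finite (dom p)" by (rule d(1))
  show "\<beta> \<in> dom p \<Longrightarrow> \<beta> \<in> E \<and> is_limit \<beta>" using d(2) by blast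
  show "p \<beta> = Some n \<Longrightarrow> p \<gamma> = Some m \<Longrightarrow> \<xi> \<in> ladder_tail l \<beta> n \<Longrightarrow> \<xi> \<in> ladder_tail l \<gamma> m \<Longrightarrow> c \<beta> \<xi> = c \<gamma> \<xi>"
    using cc by blast
qed

theorem lemma3:
  fixes l :: "'a::wellorder \<Rightarrow> nat \<Rightarrow> 'a"
    and c :: "'a \<Rightarrow> 'a \<Rightarrow> nat"
    and E :: "'a set"
  assumes omega1_uncountable: "\<not> countable (UNIV :: 'a set)"
    and omega1_segments: "\<And>x::'a. countable {y. y < x}"
    and ls: "ladder_system l"
    and statE: "stationary E"
    and costatE: "stationary (UNIV - E)"
  shows "stat_pc (UNIV - E) (PE E l c)"
  unfolding stat_pc_def
proof (intro allI impI)
  have bnd: "\<And>A::'a set. countable A \<Longrightarrow> \<exists>b. \<forall>a\<in>A. a < b"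
    using countable_bounded[OF omega1_uncountable omega1_segments] .
  note seg = omega1_segments
  fix S :: "'a set" and pp assume H: "stationary S \<and> S \<subseteq> UNIV - E \<and> (\<forall>\<alpha>\<in>S. pp \<alpha> \<in> PE E l c)"
  define P where "P = PE E l c"
  have S: "stationary S" using H by blast
  have SE: "\<And>\<alpha>. \<alpha> \<in> S \<Longrightarrow> \<alpha> \<notin> E" using H by blast
  have pS: "\<And>\<alpha>. \<alpha> \<in> S \<Longrightarrow> pp \<alpha> \<in> PE E l c" using H by blast
  have pfin: "\<And>\<alpha>. \<alpha> \<in> S \<Longrightarrow> finite (dom (pp \<alpha>))"
    by (rule PE_unpack(1)[OF pS])
  have pdom: "\<And>\<alpha> \<beta>. \<alpha> \<in> S \<Longrightarrow> \<beta> \<in> dom (pp \<alpha>) \<Longrightarrow> \<beta> \<in> E \<and> is_limit \<beta>"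
    by (rule PE_unpack(2)[OF pS])
  have pcomp: "\<And>\<alpha> \<beta> \<gamma> n m \<xi>. \<alpha> \<in> S \<Longrightarrow> pp \<alpha> \<beta> = Some n \<Longrightarrow> pp \<alpha> \<gamma> = Some m \<Longrightarrow>
        \<xi> \<in> ladder_tail l \<beta> n \<Longrightarrow> \<xi> \<in> ladder_tail l \<gamma> m \<Longrightarrow> c \<beta> \<xi> = c \<gamma> \<xi>"
    by (rule PE_unpack(3)[OF pS])
  have notin: "\<And>\<alpha> \<beta>. \<alpha> \<in> S \<Longrightarrow> \<beta> \<in> dom (pp \<alpha>) \<Longrightarrow> \<beta> \<noteq> \<alpha>"
    using pdom SE by metis
  define S1 where "S1 = S \<inter> {\<alpha>. is_limit \<alpha>}"
  have S1: "stationary S1" unfolding S1_def by (rule stationary_Int_club[OF bnd S club_limits[OF bnd]])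
  define M where "M \<alpha> = (dom (pp \<alpha>) \<inter> {\<beta>. \<beta> < \<alpha>}) \<union>
      {\<xi>. \<xi> < \<alpha> \<and> (\<exists>\<beta>\<in>dom (pp \<alpha>). \<alpha> < \<beta> \<and> \<xi> \<in> range (l \<beta>))}" for \<alpha>
  have Mfin: "finite (M \<alpha>)" if a: "\<alpha> \<in> S" for \<alpha>
  proof -
    have "M \<alpha> \<subseteq> dom (pp \<alpha>) \<union> (\<Union>\<beta>\<in>dom (pp \<alpha>). (if \<alpha> < \<beta> then {\<xi>. \<xi> < \<alpha> \<and> \<xi> \<in> range (l \<beta>)} else {}))"
      unfolding M_def by auto
    moreover have "finite (\<Union>\<beta>\<in>dom (pp \<alpha>). (if \<alpha> < \<beta> then {\<xi>. \<xi> < \<alpha> \<and> \<xi> \<in> range (l \<beta>)} else {}))"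
    proof (rule finite_UN_I[OF pfin[OF a]])
      fix \<beta> assume "\<beta> \<in> dom (pp \<alpha>)"
      then have "is_limit \<beta>" using pdom[OF a] by blast
      then show "finite (if \<alpha> < \<beta> then {\<xi>. \<xi> < \<alpha> \<and> \<xi> \<in> range (l \<beta>)} else {})"
        using ladfin[OF ls] by simp
    qed
    ultimately show ?thesis using pfin[OF a] by (meson finite_UnI finite_subset)
  qed
  have Mlt: "\<And>\<alpha> \<xi>. \<xi> \<in> M \<alpha> \<Longrightarrow> \<xi> < \<alpha>" unfolding M_def by auto
  define f where "f \<alpha> = (if M \<alpha> = {} then (SOME y. y < \<alpha>) else Max (M \<alpha>))" for \<alpha>
  have freg: "f \<alpha> < \<alpha>" if a: "\<alpha> \<in> S1" for \<alpha>
  proof (cases "M \<alpha> = {}")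
    case True
    have "\<exists>y. y < \<alpha>" using a unfolding S1_def is_limit_def by blast
    from someI_ex[OF this] show ?thesis using True unfolding f_def by simp
  next
    case False
    have "finite (M \<alpha>)" using a Mfin unfolding S1_def by blast
    then show ?thesis using False Mlt unfolding f_def by simp
  qed
  obtain \<delta> where S2st: "stationary {\<alpha>\<in>S1. f \<alpha> = \<delta>}" using fodor[OF bnd seg S1 freg] by blast
  define S2 where "S2 = {\<alpha>\<in>S1. f \<alpha> = \<delta>}"
  have S2: "stationary S2" using S2st S2_def by simp
  have S2S: "\<And>\<alpha>. \<alpha> \<in> S2 \<Longrightarrow> \<alpha> \<in> S" unfolding S2_def S1_def by auto
  have dlt: "\<And>\<alpha>. \<alpha> \<in> S2 \<Longrightarrow> \<delta> < \<alpha>" using freg unfolding S2_def by auto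
  have Mle: "\<xi> \<le> \<delta>" if "\<alpha> \<in> S2" "\<xi> \<in> M \<alpha>" for \<alpha> \<xi>
  proof -
    have "M \<alpha> \<noteq> {}" "finite (M \<alpha>)" "f \<alpha> = \<delta>" using that Mfin S2S unfolding S2_def by auto
    then show ?thesis using that(2) Max_ge[of "M \<alpha>" \<xi>] unfolding f_def by simp
  qed
  define Q where "Q \<alpha> \<xi> \<beta> = (\<exists>n. \<alpha> < \<beta> \<and> pp \<alpha> \<beta> = Some n \<and> \<xi> \<in> ladder_tail l \<beta> n)" for \<alpha> \<xi> \<beta>
  define Hm where "Hm \<alpha> \<xi> = (if \<xi> \<le> \<delta> \<and> (\<exists>\<beta>. Q \<alpha> \<xi> \<beta>) then Some (c (SOME \<beta>. Q \<alpha> \<xi> \<beta>) \<xi>) else None)" for \<alpha> \<xi>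
  have Hprop: "Hm \<alpha> \<xi> = Some (c \<beta> \<xi>)"
    if "\<alpha> \<in> S" "\<xi> \<le> \<delta>" "\<alpha> < \<beta>" "pp \<alpha> \<beta> = Some n" "\<xi> \<in> ladder_tail l \<beta> n" for \<alpha> \<xi> \<beta> n
  proof -
    have q: "Q \<alpha> \<xi> \<beta>" using that unfolding Q_def by blast
    then have "Q \<alpha> \<xi> (SOME \<beta>. Q \<alpha> \<xi> \<beta>)" by (rule someI)
    then obtain n' where "pp \<alpha> (SOME \<beta>. Q \<alpha> \<xi> \<beta>) = Some n'" "\<xi> \<in> ladder_tail l (SOME \<beta>. Q \<alpha> \<xi> \<beta>) n'"
      unfolding Q_def by blast
    then have "c (SOME \<beta>. Q \<alpha> \<xi> \<beta>) \<xi> = c \<beta> \<xi>" using pcomp[OF that(1)] that(4,5) by blast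
    then show ?thesis using q that(2) unfolding Hm_def by auto
  qed
  have domH: "dom (Hm \<alpha>) \<subseteq> M \<alpha> \<inter> {\<xi>. \<xi> \<le> \<delta>}" if a: "\<alpha> \<in> S2" for \<alpha>
  proof
    fix \<xi> assume "\<xi> \<in> dom (Hm \<alpha>)"
    then have x: "\<xi> \<le> \<delta>" and "\<exists>\<beta>. Q \<alpha> \<xi> \<beta>" unfolding Hm_def by (auto split: if_splits)
    then obtain \<beta> n where b: "\<alpha> < \<beta>" "pp \<alpha> \<beta> = Some n" "\<xi> \<in> ladder_tail l \<beta> n" unfolding Q_def by blast
    have "\<xi> < \<alpha>" using x dlt[OF a] by simp
    moreover have "\<xi> \<in> range (l \<beta>)" using b(3) unfolding ladder_tail_def by auto
    ultimately show "\<xi> \<in> M \<alpha> \<inter> {\<xi>. \<xi> \<le> \<delta>}" using b x unfolding M_def by blast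
  qed
  define K where "K \<alpha> = (pp \<alpha> |` {y. y \<le> \<delta>}, Hm \<alpha>)" for \<alpha>
  define Xm where "Xm = {m :: 'a \<rightharpoonup> nat. finite (dom m) \<and> dom m \<subseteq> {y. y \<le> \<delta>}}"
  have cXm: "countable Xm"
  proof -
    have "{y. y \<le> \<delta>} = insert \<delta> {y. y < \<delta>}" by (auto simp: le_less)
    then have "countable {y. y \<le> \<delta>}" using seg by simp
    then show ?thesis unfolding Xm_def by (rule countable_finite_maps)
  qed
  have KX: "K \<alpha> \<in> Xm \<times> Xm" if a: "\<alpha> \<in> S2" for \<alpha>
  proof -
    have "finite (dom (pp \<alpha>) \<inter> {y. y \<le> \<delta>})" using pfin[OF S2S[OF a]] by simp
    then have "pp \<alpha> |` {y. y \<le> \<delta>} \<in> Xm" unfolding Xm_def by (simp add: dom_restrict)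
    moreover have "Hm \<alpha> \<in> Xm"
    proof -
      have d1: "dom (Hm \<alpha>) \<subseteq> M \<alpha>" and d2: "dom (Hm \<alpha>) \<subseteq> {\<xi>. \<xi> \<le> \<delta>}" using domH[OF a] by blast+
      have "finite (dom (Hm \<alpha>))" using finite_subset[OF d1 Mfin[OF S2S[OF a]]] .
      then show ?thesis unfolding Xm_def using d2 by simp
    qed
    ultimately show ?thesis unfolding K_def by simp
  qed
  obtain k where S3st: "stationary {\<alpha>\<in>S2. K \<alpha> = k}"
    using countable_coloring[OF omega1_uncountable bnd seg S2, of "Xm \<times> Xm" K] cXm KX by blast
  define h where "h \<alpha> = (SOME b. \<forall>\<beta>\<in>dom (pp \<alpha>). \<beta> < b)" for \<alpha>
  have hprop: "\<beta> < h \<alpha>" if "\<alpha> \<in> S" "\<beta> \<in> dom (pp \<alpha>)" for \<alpha> \<beta>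
  proof -
    have "countable (dom (pp \<alpha>))" using pfin[OF that(1)] by (rule countable_finite)
    then have "\<exists>b. \<forall>\<beta>\<in>dom (pp \<alpha>). \<beta> < b" by (rule bnd)
    then have "\<forall>\<beta>\<in>dom (pp \<alpha>). \<beta> < h \<alpha>" unfolding h_def by (rule someI_ex)
    then show ?thesis using that by blast
  qed
  define S' where "S' = {\<alpha>\<in>S2. K \<alpha> = k} \<inter> {\<gamma>. \<forall>\<alpha><\<gamma>. h \<alpha> < \<gamma>}"
  have S'st: "stationary S'" unfolding S'_def by (rule stationary_Int_club[OF bnd S3st club_closure[OF bnd seg]])
  have S'2: "\<And>\<alpha>. \<alpha> \<in> S' \<Longrightarrow> \<alpha> \<in> S2" unfolding S'_def by blast
  have S'S: "\<And>\<alpha>. \<alpha> \<in> S' \<Longrightarrow> \<alpha> \<in> S" using S'2 S2S by blast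
  have S'K: "\<And>\<alpha>. \<alpha> \<in> S' \<Longrightarrow> K \<alpha> = k" unfolding S'_def by blast
  have S'h: "\<And>\<alpha> \<gamma>. \<gamma> \<in> S' \<Longrightarrow> \<alpha> < \<gamma> \<Longrightarrow> h \<alpha> < \<gamma>" unfolding S'_def by blast
  have agree: "pp \<alpha>1 \<beta> = pp \<alpha>2 \<beta>" if "\<alpha>1 \<in> S'" "\<alpha>2 \<in> S'" "\<beta> \<le> \<delta>" for \<alpha>1 \<alpha>2 \<beta>
  proof -
    have "(pp \<alpha>1 |` {y. y \<le> \<delta>}, Hm \<alpha>1) = (pp \<alpha>2 |` {y. y \<le> \<delta>}, Hm \<alpha>2)"
      using S'K[OF that(1)] S'K[OF that(2)] unfolding K_def by (rule trans[OF _ sym])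
    then have "(pp \<alpha>1 |` {y. y \<le> \<delta>}) \<beta> = (pp \<alpha>2 |` {y. y \<le> \<delta>}) \<beta>" by simp
    then show ?thesis using that(3) by (simp add: restrict_map_def)
  qed
  have Heq: "Hm \<alpha>1 = Hm \<alpha>2" if "\<alpha>1 \<in> S'" "\<alpha>2 \<in> S'" for \<alpha>1 \<alpha>2
  proof -
    have "(pp \<alpha>1 |` {y. y \<le> \<delta>}, Hm \<alpha>1) = (pp \<alpha>2 |` {y. y \<le> \<delta>}, Hm \<alpha>2)"
      using S'K[OF that(1)] S'K[OF that(2)] unfolding K_def by (rule trans[OF _ sym])
    then show ?thesis by simp
  qed
  have below: "\<beta> < \<alpha>2" if "\<alpha>1 \<in> S'" "\<alpha>2 \<in> S'" "\<alpha>1 < \<alpha>2" "\<beta> \<in> dom (pp \<alpha>1)" for \<alpha>1 \<alpha>2 \<beta>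
    using hprop[OF S'S[OF that(1)] that(4)] S'h[OF that(2,3)] by simp
  have rootle: "\<beta> \<le> \<delta>" if "\<alpha> \<in> S'" "\<beta> \<in> dom (pp \<alpha>)" "\<beta> < \<alpha>" for \<alpha> \<beta>
    using Mle[OF S'2[OF that(1)]] that unfolding M_def by blast
  have comp_lt: "c \<beta> \<xi> = c \<gamma> \<xi>"
    if a: "\<alpha>1 \<in> S'" "\<alpha>2 \<in> S'" "\<alpha>1 < \<alpha>2" "pp \<alpha>1 \<beta> = Some n" "pp \<alpha>2 \<gamma> = Some m"
      "\<xi> \<in> ladder_tail l \<beta> n" "\<xi> \<in> ladder_tail l \<gamma> m" for \<alpha>1 \<alpha>2 \<beta> \<gamma> n m \<xi>
  proof -
    have bd1: "\<beta> \<in> dom (pp \<alpha>1)" and gd2: "\<gamma> \<in> dom (pp \<alpha>2)" using a by auto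
    have b2: "\<beta> < \<alpha>2" using below[OF a(1-3) bd1] .
    show ?thesis
    proof (cases "\<gamma> < \<alpha>2")
      case True
      then have "\<gamma> \<le> \<delta>" using rootle[OF a(2) gd2] by simp
      then have "pp \<alpha>1 \<gamma> = Some m" using agree[OF a(1,2)] a(5) by simp
      then show ?thesis using pcomp[OF S'S[OF a(1)] a(4) _ a(6,7)] by blast
    next
      case False
      then have g2: "\<alpha>2 < \<gamma>" using notin[OF S'S[OF a(2)] gd2] by (simp add: not_less le_less)
      have xb: "\<xi> < \<beta>" using ladlt[OF ls _ a(6)] pdom[OF S'S[OF a(1)] bd1] by blast
      then have x2: "\<xi> < \<alpha>2" using b2 by simp
      have "\<xi> \<in> range (l \<gamma>)" using a(7) unfolding ladder_tail_def by auto
      then have "\<xi> \<in> M \<alpha>2" using x2 g2 gd2 unfolding M_def by blast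
      then have xd: "\<xi> \<le> \<delta>" using Mle[OF S'2[OF a(2)]] by blast
      have H2: "Hm \<alpha>2 \<xi> = Some (c \<gamma> \<xi>)" using Hprop[OF S'S[OF a(2)] xd g2 a(5,7)] .
      show ?thesis
      proof (cases "\<alpha>1 < \<beta>")
        case True
        have "Hm \<alpha>1 \<xi> = Some (c \<beta> \<xi>)" using Hprop[OF S'S[OF a(1)] xd True a(4,6)] .
        then show ?thesis using H2 Heq[OF a(1,2)] by simp
      next
        case False
        then have "\<beta> < \<alpha>1" using notin[OF S'S[OF a(1)] bd1] by (simp add: not_less le_less)
        then have "\<beta> \<le> \<delta>" using rootle[OF a(1) bd1] by simp
        then have "pp \<alpha>2 \<beta> = Some n" using agree[OF a(1,2)] a(4) by simp
        then show ?thesis using pcomp[OF S'S[OF a(2)] _ a(5) a(6,7)] by blast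
      qed
    qed
  qed
  have comp: "c \<beta> \<xi> = c \<gamma> \<xi>"
    if a: "\<alpha>1 \<in> S'" "\<alpha>2 \<in> S'" "pp \<alpha>1 \<beta> = Some n" "pp \<alpha>2 \<gamma> = Some m"
      "\<xi> \<in> ladder_tail l \<beta> n" "\<xi> \<in> ladder_tail l \<gamma> m" for \<alpha>1 \<alpha>2 \<beta> \<gamma> n m \<xi>
  proof (cases \<alpha>1 \<alpha>2 rule: linorder_cases)
    case less show ?thesis using comp_lt[OF a(1,2) less a(3-6)] .
  next
    case equal then show ?thesis using pcomp[OF S'S[OF a(1)] a(3)] a(4-6) by blast
  next
    case greater then show ?thesis using comp_lt[OF a(2,1) greater a(4,3) a(6,5)] by simp
  qed
  have cons: "pp \<alpha>1 \<beta> = pp \<alpha>2 \<beta>" if a: "\<alpha>1 \<in> S'" "\<alpha>2 \<in> S'" "\<beta> \<in> dom (pp \<alpha>1)" "\<beta> \<in> dom (pp \<alpha>2)" for \<alpha>1 \<alpha>2 \<beta>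
  proof (cases \<alpha>1 \<alpha>2 rule: linorder_cases)
    case less
    then have "\<beta> < \<alpha>2" using below a by blast
    then show ?thesis using agree[OF a(1,2)] rootle[OF a(2,4)] by simp
  next
    case equal then show ?thesis by simp
  next
    case greater
    then have "\<beta> < \<alpha>1" using below a by blast
    then show ?thesis using agree[OF a(1,2)] rootle[OF a(1,3)] by simp
  qed
  have "centered P (pp ` S')"
    unfolding centered_def
  proof (intro allI impI)
    fix F assume F: "finite F \<and> F \<subseteq> pp ` S'"
    then obtain A where A: "A \<subseteq> S'" "finite A" "F = pp ` A" by (meson finite_subset_image)
    define q where "q \<beta> = (if \<exists>\<alpha>\<in>A. \<beta> \<in> dom (pp \<alpha>) then pp (SOME \<alpha>. \<alpha> \<in> A \<and> \<beta> \<in> dom (pp \<alpha>)) \<beta> else None)" for \<beta>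
    have qsome: "\<exists>\<alpha>\<in>A. pp \<alpha> \<beta> = Some n" if "q \<beta> = Some n" for \<beta> n
    proof -
      have e: "\<exists>\<alpha>. \<alpha> \<in> A \<and> \<beta> \<in> dom (pp \<alpha>)" using that unfolding q_def by (auto split: if_splits)
      then have "(SOME \<alpha>. \<alpha> \<in> A \<and> \<beta> \<in> dom (pp \<alpha>)) \<in> A" by (metis (mono_tags, lifting) someI_ex)
      moreover have "pp (SOME \<alpha>. \<alpha> \<in> A \<and> \<beta> \<in> dom (pp \<alpha>)) \<beta> = Some n"
      proof -
        have e': "\<exists>\<alpha>\<in>A. \<beta> \<in> dom (pp \<alpha>)" using e by blast
        have "q \<beta> = pp (SOME \<alpha>. \<alpha> \<in> A \<and> \<beta> \<in> dom (pp \<alpha>)) \<beta>" unfolding q_def by (rule if_P[OF e'])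
        then show ?thesis using that by simp
      qed
      ultimately show ?thesis by blast
    qed
    have ext: "pp \<alpha> \<subseteq>\<^sub>m q" if a: "\<alpha> \<in> A" for \<alpha>
      unfolding map_le_def
    proof
      fix \<beta> assume b: "\<beta> \<in> dom (pp \<alpha>)"
      then have e: "\<exists>\<alpha>. \<alpha> \<in> A \<and> \<beta> \<in> dom (pp \<alpha>)" using a by blast
      define \<alpha>' where "\<alpha>' = (SOME \<alpha>. \<alpha> \<in> A \<and> \<beta> \<in> dom (pp \<alpha>))"
      have a': "\<alpha>' \<in> A" "\<beta> \<in> dom (pp \<alpha>')" unfolding \<alpha>'_def using someI_ex[OF e] by auto
      have "q \<beta> = pp \<alpha>' \<beta>" using e unfolding q_def \<alpha>'_def by auto
      then show "pp \<alpha> \<beta> = q \<beta>" using cons[of \<alpha> \<alpha>' \<beta>] a a' b A(1) by auto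
    qed
    have domq: "dom q = (\<Union>\<alpha>\<in>A. dom (pp \<alpha>))"
    proof
      show "dom q \<subseteq> (\<Union>\<alpha>\<in>A. dom (pp \<alpha>))" using qsome by blast
      show "(\<Union>\<alpha>\<in>A. dom (pp \<alpha>)) \<subseteq> dom q" using ext unfolding map_le_def by (auto simp: dom_def)
    qed
    have "q \<in> P" unfolding P_def PE_def
    proof (intro CollectI conjI allI impI)
      show "finite (dom q)" unfolding domq using A pfin S'S by blast
      show "dom q \<subseteq> E \<inter> {\<alpha>. is_limit \<alpha>}" unfolding domq using A pdom S'S by blast
      fix \<beta> \<gamma> n m \<xi>
      assume q1: "q \<beta> = Some n" and q2: "q \<gamma> = Some m"
        and x1: "\<xi> \<in> ladder_tail l \<beta> n" and x2: "\<xi> \<in> ladder_tail l \<gamma> m"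
      obtain \<alpha>1 where "\<alpha>1 \<in> A" "pp \<alpha>1 \<beta> = Some n" using qsome[OF q1] by blast
      moreover obtain \<alpha>2 where "\<alpha>2 \<in> A" "pp \<alpha>2 \<gamma> = Some m" using qsome[OF q2] by blast
      ultimately show "c \<beta> \<xi> = c \<gamma> \<xi>" using comp[OF _ _ _ _ x1 x2] A(1) by blast
    qed
    then show "\<exists>q\<in>P. \<forall>p\<in>F. p \<subseteq>\<^sub>m q" using ext A(3) by blast
  qed
  moreover have "S' \<subseteq> S" using S'S by blast
  ultimately show "\<exists>S'. stationary S' \<and> S' \<subseteq> S \<and> centered (PE E l c) (pp ` S')"
    using S'st P_def by blast
qed

end
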